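(* Consider the generalized one-way trading problem (GOT) with capacity $C$ and bounds $0<L\le U$, under Assumption A. If there exists an $\alpha$-competitive online algorithm for GOT, then there exists a non-decreasing function $\psi:[L,U]\to[0,C]$ satisfying $$L\psi(L)+\int_L^p u\,d\psi(u)\ge \frac{pC}{\alpha}\ \ \text{for all }p\in[L,U],\qquad \psi(L)\ge \frac{C}{\alpha},\qquad \psi(U)\le C,$$ where the integral is a Riemann–Stieltjes integral.
   Context: GOT: a single knapsack of capacity $C$; items $n=1,\dots,N$ arrive one at a time; item $n$ has size $D_n>0$ and value function $g_n:[0,D_n]\to\mathbb R_{\ge0}$, revealed on arrival. Offline problem: $\max\sum_n g_n(y_n)$ s.t. $\sum_n y_n\le C$, $0\le y_n\le D_n$. Assumption A: each $g_n$ is non-decreasing, differentiable, concave, $g_n(0)=0$, $L\le g_n'\le U$, with $C,L,U$ known. An online algorithm irrevocably chooses $y_n$ on arrival of item $n$ using only items $1,\dots,n$ and $C,L,U$, keeping the constraints feasible; it is $\alpha$-competitive if $\mathrm{OPT}(\mathcal I)\le\alpha\,\mathrm{ALG}(\mathcal I)$ for every instance $\mathcal I$ satisfying Assumption A. *)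

theory Defs
  imports "HOL-Analysis.Analysis"
begin

text \<open>An item is a pair (D, g): size D and value function g (only its values on [0,D] matter).\<close>
type_synonym item = "real \<times> (real \<Rightarrow> real)"

definition assumpA :: "real \<Rightarrow> real \<Rightarrow> item \<Rightarrow> bool" where
  "assumpA L U it \<longleftrightarrow>
     (let D = fst it; g = snd it in
       D > 0 \<and> g 0 = 0 \<and> (\<forall>y\<in>{0..D}. g y \<ge> 0) \<and> mono_on {0..D} g \<and>
       concave_on {0..D} g \<and>
       (\<forall>y\<in>{0..D}. \<exists>g'. (g has_real_derivative g') (at y within {0..D}) \<and> L \<le> g' \<and> g' \<le> U))"

definition valid_instance :: "real \<Rightarrow> real \<Rightarrow> item list \<Rightarrow> bool" where
  "valid_instance L U I \<longleftrightarrow> (\<forall>it\<in>set I. assumpA L U it)"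

definition feasible_alloc :: "real \<Rightarrow> item list \<Rightarrow> (nat \<Rightarrow> real) \<Rightarrow> bool" where
  "feasible_alloc C I y \<longleftrightarrow>
     (\<forall>n<length I. 0 \<le> y n \<and> y n \<le> fst (I ! n)) \<and> (\<Sum>n<length I. y n) \<le> C"

definition OPT :: "real \<Rightarrow> item list \<Rightarrow> real" where
  "OPT C I = (SUP y \<in> {y. feasible_alloc C I y}. \<Sum>n<length I. snd (I ! n) (y n))"

text \<open>A deterministic online algorithm maps the prefix of items 1..n (the last being the
  current item) to the irrevocable decision y_n. The known parameters C, L, U are fixed.\<close>
type_synonym online_alg = "item list \<Rightarrow> real"

definition alg_decision :: "online_alg \<Rightarrow> item list \<Rightarrow> nat \<Rightarrow> real" where
  "alg_decision A I n = A (take (Suc n) I)"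

definition ALG :: "online_alg \<Rightarrow> item list \<Rightarrow> real" where
  "ALG A I = (\<Sum>n<length I. snd (I ! n) (alg_decision A I n))"

definition online_feasible :: "real \<Rightarrow> real \<Rightarrow> real \<Rightarrow> online_alg \<Rightarrow> bool" where
  "online_feasible C L U A \<longleftrightarrow>
     (\<forall>I. valid_instance L U I \<longrightarrow> feasible_alloc C I (alg_decision A I))"

definition competitive :: "real \<Rightarrow> real \<Rightarrow> real \<Rightarrow> real \<Rightarrow> online_alg \<Rightarrow> bool" where
  "competitive C L U \<alpha> A \<longleftrightarrow> online_feasible C L U A \<and>
     (\<forall>I. valid_instance L U I \<longrightarrow> OPT C I \<le> \<alpha> * ALG A I)"

definition RS_tagged_partition ::
  "real \<Rightarrow> real \<Rightarrow> (nat \<Rightarrow> real) \<Rightarrow> (nat \<Rightarrow> real) \<Rightarrow> nat \<Rightarrow> bool" where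
  "RS_tagged_partition a b x t n \<longleftrightarrow> x 0 = a \<and> x n = b \<and>
     (\<forall>i<n. x i \<le> t i \<and> t i \<le> x (Suc i))"

definition RS_sum ::
  "(real \<Rightarrow> real) \<Rightarrow> (real \<Rightarrow> real) \<Rightarrow> (nat \<Rightarrow> real) \<Rightarrow> (nat \<Rightarrow> real) \<Rightarrow> nat \<Rightarrow> real" where
  "RS_sum f g x t n = (\<Sum>i<n. f (t i) * (g (x (Suc i)) - g (x i)))"

definition has_RS_integral ::
  "(real \<Rightarrow> real) \<Rightarrow> (real \<Rightarrow> real) \<Rightarrow> real \<Rightarrow> real \<Rightarrow> real \<Rightarrow> bool" where
  "has_RS_integral f g a b I \<longleftrightarrow>
     (\<forall>\<epsilon>>0. \<exists>\<delta>>0. \<forall>x t n. RS_tagged_partition a b x t n \<and> (\<forall>i<n. x (Suc i) - x i < \<delta>)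
        \<longrightarrow> \<bar>RS_sum f g x t n - I\<bar> < \<epsilon>)"

end

theory Submission
  imports Defs
begin


definition lin_item :: "real \<Rightarrow> real \<Rightarrow> item" where
  "lin_item C q = (C, \<lambda>y. q * y)"

lemma assumpA_lin:
  assumes "C > 0" "L \<le> q" "q \<le> U" "0 \<le> q"
  shows "assumpA L U (lin_item C q)"
proof -
  have "concave_on {0..C} (\<lambda>y. q * y)"
    by (rule concave_on_linorderI) (auto simp: algebra_simps)
  moreover have "mono_on {0..C} (\<lambda>y. q * y)"
    using assms by (auto simp: mono_on_def mult_left_mono)
  moreover have "\<forall>y\<in>{0..C}. \<exists>g'. ((\<lambda>y. q * y) has_real_derivative g') (at y within {0..C}) \<and> L \<le> g' \<and> g' \<le> U"
    using assms by (auto intro!: exI[of _ q] derivative_eq_intros)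
  ultimately show ?thesis using assms
    by (auto simp: assumpA_def lin_item_def Let_def)
qed

lemma ln_term:
  fixes L a t b d :: real
  assumes "0 < L" "L \<le> a" "a \<le> t" "t \<le> b" "b - a < d"
  shows "\<bar>t * ln (b/a) - (b-a)\<bar> \<le> (b-a)*d/L"
proof -
  have a0: "a > 0" using assms by linarith
  have b0: "b > 0" using assms by linarith
  have up: "ln (b/a) \<le> (b-a)/a" using ln_le_minus_one[of "b/a"] a0 b0
    by (simp add: field_simps)
  have lo: "ln (b/a) \<ge> (b-a)/b"
  proof -
    have "ln (a/b) \<le> a/b - 1" using ln_le_minus_one[of "a/b"] a0 b0 by simp
    moreover have "ln (b/a) = - ln (a/b)" using a0 b0 by (simp add: ln_div)
    ultimately show ?thesis using b0 by (simp add: field_simps)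
  qed
  have ba: "0 \<le> b - a" using assms by linarith
  have l0: "0 \<le> ln (b/a)" using a0 b0 assms by simp
  have "t * ln (b/a) \<le> b * ((b-a)/a)"
    using up l0 assms a0 by (intro mult_mono) auto
  also have "\<dots> = (b-a) + (b-a)*((b-a)/a)" using a0 by (simp add: field_simps)
  also have "\<dots> \<le> (b-a) + (b-a)*(d/L)"
  proof -
    have "(b-a)/a \<le> d/L"
      using assms a0 ba by (intro frac_le) auto
    then have "(b-a)*((b-a)/a) \<le> (b-a)*(d/L)" using ba by (rule mult_left_mono)
    thus ?thesis by linarith
  qed
  finally have A: "t * ln (b/a) \<le> (b-a) + (b-a)*(d/L)" .
  have "a * ((b-a)/b) \<le> t * ln (b/a)"
    using lo assms a0 b0 ba by (intro mult_mono) auto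
  moreover have "a * ((b-a)/b) = (b-a) - (b-a)*((b-a)/b)" using b0 by (simp add: field_simps)
  moreover have "(b-a)*((b-a)/b) \<le> (b-a)*(d/L)"
  proof -
    have "(b-a)/b \<le> d/L"
      using assms a0 ba by (intro frac_le) auto
    thus ?thesis using ba by (metis mult_left_mono)
  qed
  ultimately have B: "(b-a) - (b-a)*(d/L) \<le> t * ln (b/a)" by linarith
  show ?thesis using A B by (simp add: abs_le_iff)
qed

lemma part_mono:
  assumes "RS_tagged_partition a b x t n" "i \<le> j" "j \<le> n"
  shows "x i \<le> x j"
  using assms(2,3)
proof (induction j rule: dec_induct)
  case base then show ?case by simp
next
  case (step m)
  then have "m < n" using assms(3) by simp
  then have "x m \<le> x (Suc m)" using assms(1) unfolding RS_tagged_partition_def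
    by (meson order_trans)
  with step show ?case by simp
qed

lemma RS_log:
  assumes "c \<ge> 0" "0 < L" "L \<le> p"
  shows "has_RS_integral (\<lambda>u. u) (\<lambda>u. c * (1 + ln (u/L))) L p (c * (p - L))"
  unfolding has_RS_integral_def
proof (intro allI impI)
  fix \<epsilon> :: real assume e: "\<epsilon> > 0"
  define K where "K = c * (p - L)"
  have K0: "K \<ge> 0" using assms by (simp add: K_def)
  define d where "d = \<epsilon> * L / (K + 1)"
  have d0: "d > 0" using e assms K0 by (simp add: d_def)
  show "\<exists>\<delta>>0. \<forall>x t n. RS_tagged_partition L p x t n \<and> (\<forall>i<n. x (Suc i) - x i < \<delta>) \<longrightarrow>
          \<bar>RS_sum (\<lambda>u. u) (\<lambda>u. c * (1 + ln (u / L))) x t n - c * (p - L)\<bar> < \<epsilon>"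
  proof (intro exI[of _ d] conjI allI impI)
    show "d > 0" by fact
    fix x t n assume H: "RS_tagged_partition L p x t n \<and> (\<forall>i<n. x (Suc i) - x i < d)"
    have P: "RS_tagged_partition L p x t n" using H by simp
    have x0: "x 0 = L" and xn: "x n = p" using P by (auto simp: RS_tagged_partition_def)
    have xL: "L \<le> x i" if "i \<le> n" for i using part_mono[OF P, of 0 i] that x0 by simp
    have tag: "x i \<le> t i \<and> t i \<le> x (Suc i)" if "i < n" for i
      using P that by (auto simp: RS_tagged_partition_def)
    have termeq: "(t i) * (c * (1 + ln (x (Suc i) / L)) - c * (1 + ln (x i / L)))
        = c * (t i * ln (x (Suc i) / x i))" if "i < n" for i
    proof -
      have "L \<le> x i" "L \<le> x (Suc i)" using xL that by auto
      then have "x i > 0" "x (Suc i) > 0" using assms by auto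
      then show ?thesis using assms by (simp add: ln_div algebra_simps)
    qed
    have RS: "RS_sum (\<lambda>u. u) (\<lambda>u. c * (1 + ln (u / L))) x t n = (\<Sum>i<n. c * (t i * ln (x (Suc i) / x i)))"
      unfolding RS_sum_def using termeq by (intro sum.cong) auto
    have tel: "c * (p - L) = (\<Sum>i<n. c * (x (Suc i) - x i))"
      using sum_lessThan_telescope[of x n] x0 xn by (simp add: sum_distrib_left[symmetric])
    have "\<bar>RS_sum (\<lambda>u. u) (\<lambda>u. c * (1 + ln (u / L))) x t n - c * (p - L)\<bar>
        = \<bar>\<Sum>i<n. c * (t i * ln (x (Suc i) / x i) - (x (Suc i) - x i))\<bar>"
      unfolding RS tel sum_subtractf[symmetric] by (simp add: algebra_simps)
    also have "\<dots> \<le> (\<Sum>i<n. \<bar>c * (t i * ln (x (Suc i) / x i) - (x (Suc i) - x i))\<bar>)"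
      by (rule sum_abs)
    also have "\<dots> \<le> (\<Sum>i<n. c * ((x (Suc i) - x i) * d / L))"
    proof (rule sum_mono)
      fix i assume "i \<in> {..<n}"
      then have i: "i < n" by simp
      have "\<bar>t i * ln (x (Suc i) / x i) - (x (Suc i) - x i)\<bar> \<le> (x (Suc i) - x i) * d / L"
        using ln_term[of L "x i" "t i" "x (Suc i)" d] assms xL[of i] tag[OF i] H i by auto
      then show "\<bar>c * (t i * ln (x (Suc i) / x i) - (x (Suc i) - x i))\<bar> \<le> c * ((x (Suc i) - x i) * d / L)"
        using mult_left_mono[OF _ assms(1)] assms(1) by (simp add: abs_mult times_divide_eq_right[symmetric] del: times_divide_eq_right)
    qed
    also have "\<dots> = (d / L) * (\<Sum>i<n. c * (x (Suc i) - x i))"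
      by (simp add: sum_distrib_left) (simp add: algebra_simps)
    also have "\<dots> = (d / L) * K" using tel K_def by simp
    also have "\<dots> = \<epsilon> * K / (K + 1)" proof -
      have "d / L = \<epsilon> / (K + 1)" using assms by (simp add: d_def)
      then show ?thesis by simp
    qed
    also have "\<dots> < \<epsilon>" using e K0 by (simp add: field_simps)
    finally show "\<bar>RS_sum (\<lambda>u. u) (\<lambda>u. c * (1 + ln (u / L))) x t n - c * (p - L)\<bar> < \<epsilon>" .
  qed
qed



lemma discrete_bound:
  fixes y P :: "nat \<Rightarrow> real" and c :: real
  assumes y0: "\<forall>i\<le>k. 0 \<le> y i" and P0: "\<forall>i\<le>k. 0 < P i"
    and Pm: "\<forall>i<k. P i \<le> P (Suc i)"
    and comp: "\<forall>j\<le>k. P j * c \<le> (\<Sum>n<Suc j. P n * y n)"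
  shows "j \<le> k \<Longrightarrow> (\<Sum>n<Suc j. P n * y n) / P j + c * (\<Sum>i<j. 1 - P i / P (Suc i)) \<le> (\<Sum>n<Suc j. y n)"
proof (induction j)
  case 0
  have "P 0 > 0" using P0 by simp
  then show ?case by simp
next
  case (Suc j)
  define S where "S = (\<Sum>n<Suc j. P n * y n)"
  have pj: "P j > 0" and pj1: "P (Suc j) > 0" using P0 Suc.prems by auto
  have mono: "P j \<le> P (Suc j)" using Pm Suc.prems by auto
  have Sge: "P j * c \<le> S" using comp Suc.prems unfolding S_def by auto
  have IH: "S / P j + c * (\<Sum>i<j. 1 - P i / P (Suc i)) \<le> (\<Sum>n<Suc j. y n)"
    using Suc S_def by auto
  have key: "S / P (Suc j) + c * (1 - P j / P (Suc j)) \<le> S / P j"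
  proof -
    have nn: "0 \<le> (P (Suc j) - P j) / (P j * P (Suc j))" using pj pj1 mono by simp
    have "P j * c * ((P (Suc j) - P j) / (P j * P (Suc j))) \<le> S * ((P (Suc j) - P j) / (P j * P (Suc j)))"
      using mult_right_mono[OF Sge nn] .
    moreover have "P j * c * ((P (Suc j) - P j) / (P j * P (Suc j))) = c * (1 - P j / P (Suc j))"
      using pj pj1 by (simp add: field_simps)
    moreover have "S * ((P (Suc j) - P j) / (P j * P (Suc j))) = S / P j - S / P (Suc j)"
      using pj pj1 by (simp add: field_simps)
    ultimately show ?thesis by linarith
  qed
  have "(\<Sum>n<Suc (Suc j). P n * y n) / P (Suc j) = S / P (Suc j) + y (Suc j)"
    using pj1 by (simp add: S_def field_simps)
  then show ?case using IH key by (simp add: algebra_simps)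
qed

lemma OPT_lin_ge:
  assumes "C > 0" "\<forall>n<m. 0 \<le> Q n \<and> Q n \<le> U" "j < m"
  shows "Q j * C \<le> OPT C (map (\<lambda>i. lin_item C (Q i)) [0..<m])"
proof -
  let ?I = "map (\<lambda>i. lin_item C (Q i)) [0..<m]"
  have nth: "?I ! n = (C, \<lambda>y. Q n * y)" if "n < m" for n using that by (simp add: lin_item_def)
  have val: "(\<Sum>n<length ?I. snd (?I ! n) (w n)) = (\<Sum>n<m. Q n * w n)" for w
    by (intro sum.cong) (auto simp: lin_item_def)
  define z where "z = (\<lambda>n. if n = j then C else (0::real))"
  have zf: "feasible_alloc C ?I z"
    using assms by (auto simp: feasible_alloc_def lin_item_def z_def)
  have U0: "0 \<le> U" using assms by force
  have bdd: "bdd_above ((\<lambda>w. \<Sum>n<length ?I. snd (?I ! n) (w n)) ` {w. feasible_alloc C ?I w})"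
  proof (rule bdd_aboveI2)
    fix w assume "w \<in> {w. feasible_alloc C ?I w}"
    then have w: "\<forall>n<m. 0 \<le> w n" "(\<Sum>n<m. w n) \<le> C" by (auto simp: feasible_alloc_def)
    have "(\<Sum>n<m. Q n * w n) \<le> (\<Sum>n<m. U * w n)"
      using assms w by (intro sum_mono) (auto intro: mult_right_mono)
    also have "\<dots> = U * (\<Sum>n<m. w n)" by (simp add: sum_distrib_left)
    also have "\<dots> \<le> U * C" using w U0 by (simp add: mult_left_mono)
    finally show "(\<Sum>n<length ?I. snd (?I ! n) (w n)) \<le> U * C" by (simp only: val)
  qed
  have "(\<Sum>n<length ?I. snd (?I ! n) (z n)) = Q j * C"
    using assms by (simp only: val) (simp add: z_def if_distrib cong: if_cong)
  moreover have "(\<Sum>n<length ?I. snd (?I ! n) (z n)) \<le> OPT C ?I"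
    unfolding OPT_def using bdd zf by (intro cSUP_upper) auto
  ultimately show ?thesis by simp
qed



lemma bound_k:
  fixes C L U \<alpha> :: real and A :: online_alg and k :: nat
  assumes C0: "C > 0" and L0: "0 < L" and LU: "L \<le> U"
    and comp: "competitive C L U \<alpha> A" and k1: "k \<ge> 1"
  shows "\<alpha> > 0 \<and> 1 + ln (U/L) * k / (k + ln (U/L)) \<le> \<alpha>"
proof -
  define a where "a = ln (U/L)"
  have a0: "a \<ge> 0" using L0 LU by (simp add: a_def)
  have ea: "exp a = U / L" using L0 LU by (simp add: a_def)
  define P where "P i = L * exp (real i * a / real k)" for i
  define f where "f i = lin_item C (P i)" for i
  define I where "I m = map f [0..<m]" for m
  define y where "y n = A (map f [0..<Suc n])" for n
  have kpos: "real k > 0" using k1 by simp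
  have Prange: "L \<le> P i \<and> P i \<le> U" if "i \<le> k" for i
  proof
    have "0 \<le> real i * a / real k" using a0 by simp
    then show "L \<le> P i" using L0 by (simp add: P_def)
    have "real i * a / real k \<le> a" using that a0 kpos
      by (simp add: field_simps mult_left_mono)
    then have "exp (real i * a / real k) \<le> U / L" using ea by (metis exp_le_cancel_iff)
    then show "P i \<le> U" using L0 by (simp add: P_def field_simps)
  qed
  have Ppos: "P i > 0" for i using L0 by (simp add: P_def)
  have valid: "valid_instance L U (I m)" if "m \<le> Suc k" for m
    unfolding valid_instance_def
  proof (auto simp: I_def f_def)
    fix x assume "x < m"
    then have "x \<le> k" using that by simp
    then show "assumpA L U (lin_item C (P x))"
      using Prange[of x] Ppos[of x] C0 by (intro assumpA_lin) auto
  qed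
  have dec: "alg_decision A (I m) n = y n" if "n < m" for m n
    using that by (simp add: alg_decision_def I_def y_def take_map take_upt)
  have nthI: "I m ! n = f n" if "n < m" for m n using that by (simp add: I_def)
  have lenI: "length (I m) = m" for m by (simp add: I_def)
  have ALGeq: "ALG A (I m) = (\<Sum>n<m. P n * y n)" for m
    unfolding ALG_def lenI by (intro sum.cong) (auto simp: f_def lin_item_def dec nthI)
  have feas: "feasible_alloc C (I (Suc k)) (alg_decision A (I (Suc k)))"
    using comp valid[of "Suc k"] by (auto simp: competitive_def online_feasible_def)
  have y0: "\<forall>i\<le>k. 0 \<le> y i" and ysum: "(\<Sum>n<Suc k. y n) \<le> C"
  proof -
    have "(\<Sum>n<Suc k. alg_decision A (I (Suc k)) n) = (\<Sum>n<Suc k. y n)"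
      by (intro sum.cong) (auto simp: dec)
    then show "(\<Sum>n<Suc k. y n) \<le> C" using feas by (simp add: feasible_alloc_def I_def)
    show "\<forall>i\<le>k. 0 \<le> y i" using feas dec[of _ "Suc k"] by (auto simp: feasible_alloc_def I_def)
  qed
  have compj: "P j * C \<le> \<alpha> * (\<Sum>n<Suc j. P n * y n)" if "j \<le> k" for j
  proof -
    have "P j * C \<le> OPT C (I (Suc j))"
      unfolding I_def f_def
      using OPT_lin_ge[of C "Suc j" P U j] C0 Prange Ppos that by (auto intro: less_imp_le)
    also have "\<dots> \<le> \<alpha> * ALG A (I (Suc j))"
      using comp valid[of "Suc j"] that by (auto simp: competitive_def)
    finally show ?thesis by (simp add: ALGeq)
  qed
  have apos: "\<alpha> > 0"
  proof (rule ccontr)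
    assume "\<not> \<alpha> > 0"
    moreover have "0 \<le> P 0 * y 0" using Ppos y0 by (simp add: less_imp_le)
    ultimately have "\<alpha> * (P 0 * y 0) \<le> 0" by (simp add: mult_nonpos_nonneg)
    moreover have "P 0 * C > 0" using Ppos C0 by simp
    ultimately show False using compj[of 0] by simp
  qed
  define c where "c = C / \<alpha>"
  have compc: "\<forall>j\<le>k. P j * c \<le> (\<Sum>n<Suc j. P n * y n)"
  proof (intro allI impI)
    fix j assume "j \<le> k"
    then have "P j * C \<le> \<alpha> * (\<Sum>n<Suc j. P n * y n)" by (rule compj)
    then show "P j * c \<le> (\<Sum>n<Suc j. P n * y n)" using apos
      by (simp add: c_def field_simps)
  qed
  have Pmono: "\<forall>i<k. P i \<le> P (Suc i)"
    using a0 kpos L0 by (auto simp: P_def divide_right_mono mult_right_mono)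
  have D: "(\<Sum>n<Suc k. P n * y n) / P k + c * (\<Sum>i<k. 1 - P i / P (Suc i)) \<le> (\<Sum>n<Suc k. y n)"
    using discrete_bound[of k y P c] y0 Ppos Pmono compc by auto
  have ratio: "P i / P (Suc i) = exp (- (a / k))" for i
  proof -
    have "P i / P (Suc i) = exp (real i * a / real k) / exp (real (Suc i) * a / real k)"
      using L0 by (simp add: P_def)
    also have "\<dots> = exp (real i * a / real k - real (Suc i) * a / real k)" by (simp add: exp_diff)
    also have "real i * a / real k - real (Suc i) * a / real k = - (a / k)"
      by (simp add: add_divide_distrib algebra_simps)
    finally show ?thesis .
  qed
  have c0: "c > 0" using C0 apos by (simp add: c_def)
  have first: "c \<le> (\<Sum>n<Suc k. P n * y n) / P k"
    using compc Ppos[of k] by (simp add: field_simps)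
  have "c * (1 + k * (1 - exp (- (a / k)))) \<le> C"
    using D first ysum by (simp add: ratio algebra_simps)
  then have "C * (1 + k * (1 - exp (- (a / k)))) \<le> C * \<alpha>"
    using C0 apos by (simp add: c_def field_simps)
  then have B1: "1 + k * (1 - exp (- (a / k))) \<le> \<alpha>"
    using C0 by (rule mult_left_le_imp_le)
  have "exp (a / k) \<ge> 1 + a / k" by (rule exp_ge_add_one_self)
  then have "exp (- (a / k)) \<le> 1 / (1 + a / k)"
    using a0 kpos by (simp add: exp_minus field_simps)
  then have "k * (1 - 1 / (1 + a / k)) \<le> k * (1 - exp (- (a / k)))"
    using kpos by (intro mult_left_mono) auto
  moreover have "k * (1 - 1 / (1 + a / k)) = a * k / (k + a)"
    using kpos a0 by (simp add: field_simps)
  ultimately show ?thesis using B1 apos unfolding a_def by linarith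
qed



lemma lower_bound:
  fixes C L U \<alpha> :: real and A :: online_alg
  assumes C0: "C > 0" and L0: "0 < L" and LU: "L \<le> U"
    and comp: "competitive C L U \<alpha> A"
  shows "\<alpha> > 0 \<and> 1 + ln (U/L) \<le> \<alpha>"
proof -
  define a where "a = ln (U/L)"
  have a0: "a \<ge> 0" using L0 LU by (simp add: a_def)
  have apos: "\<alpha> > 0" using bound_k[OF C0 L0 LU comp, of 1] by simp
  have "1 + a \<le> \<alpha>"
  proof (rule ccontr)
    assume "\<not> 1 + a \<le> \<alpha>"
    then have e: "1 + a - \<alpha> > 0" by simp
    define \<epsilon> where "\<epsilon> = 1 + a - \<alpha>"
    have e0: "\<epsilon> > 0" using e by (simp add: \<epsilon>_def)
    define k where "k = nat \<lceil>a^2 / \<epsilon>\<rceil> + 1"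
    have k1: "k \<ge> 1" by (simp add: k_def)
    have kbig: "real k > a^2 / \<epsilon>" unfolding k_def by linarith
    have kpos: "real k > 0" using k1 by simp
    have B: "1 + a * k / (k + a) \<le> \<alpha>" using bound_k[OF C0 L0 LU comp k1] by (simp add: a_def)
    have "a - a * k / (k + a) = a^2 / (k + a)"
      using kpos a0 by (simp add: field_simps power2_eq_square)
    also have "\<dots> \<le> a^2 / k"
      using kpos a0 by (intro divide_left_mono) auto
    also have "\<dots> < \<epsilon>" using kbig kpos e0 by (simp add: field_simps)
    finally show False using B by (simp add: \<epsilon>_def)
  qed
  then show ?thesis using apos by (simp add: a_def)
qed

theorem lemma2:
  fixes C L U \<alpha> :: real and A :: online_alg
  assumes "C > 0" and "0 < L" and "L \<le> U"
    and "competitive C L U \<alpha> A"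
  shows "\<exists>\<psi> :: real \<Rightarrow> real.
           mono_on {L..U} \<psi> \<and> (\<forall>u\<in>{L..U}. 0 \<le> \<psi> u \<and> \<psi> u \<le> C) \<and>
           (\<forall>p\<in>{L..U}. \<exists>J. has_RS_integral (\<lambda>u. u) \<psi> L p J \<and> L * \<psi> L + J \<ge> p * C / \<alpha>) \<and>
           \<psi> L \<ge> C / \<alpha> \<and> \<psi> U \<le> C"
proof -
  have lb: "\<alpha> > 0" "1 + ln (U/L) \<le> \<alpha>" using lower_bound[OF assms] by auto
  define c where "c = C / \<alpha>"
  have c0: "c > 0" using lb assms by (simp add: c_def)
  define \<psi> where "\<psi> u = c * (1 + ln (u / L))" for u
  have lnmono: "ln (u / L) \<le> ln (v / L)" if "L \<le> u" "u \<le> v" for u v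
    using that assms by (simp add: divide_right_mono)
  have cC: "c * (1 + ln (U / L)) \<le> C"
  proof -
    have "c * (1 + ln (U / L)) \<le> c * \<alpha>" using lb c0 by (intro mult_left_mono) auto
    also have "c * \<alpha> = C" using lb by (simp add: c_def)
    finally show ?thesis .
  qed
  have "mono_on {L..U} \<psi>"
    unfolding mono_on_def \<psi>_def using lnmono c0 by (auto intro!: mult_left_mono)
  moreover have "\<forall>u\<in>{L..U}. 0 \<le> \<psi> u \<and> \<psi> u \<le> C"
  proof
    fix u assume u: "u \<in> {L..U}"
    have "0 \<le> ln (u / L)" using u assms by simp
    then have "0 \<le> \<psi> u" using c0 by (simp add: \<psi>_def)
    moreover have "\<psi> u \<le> c * (1 + ln (U / L))"
      unfolding \<psi>_def using lnmono[of u U] u c0 by (intro mult_left_mono) auto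
    ultimately show "0 \<le> \<psi> u \<and> \<psi> u \<le> C" using cC by linarith
  qed
  moreover have "\<forall>p\<in>{L..U}. \<exists>J. has_RS_integral (\<lambda>u. u) \<psi> L p J \<and> L * \<psi> L + J \<ge> p * C / \<alpha>"
  proof
    fix p assume p: "p \<in> {L..U}"
    have "has_RS_integral (\<lambda>u. u) \<psi> L p (c * (p - L))"
      unfolding \<psi>_def using RS_log[of c L p] c0 assms p by auto
    moreover have "L * \<psi> L + c * (p - L) = p * C / \<alpha>"
      using assms lb by (simp add: \<psi>_def c_def add_divide_distrib[symmetric] algebra_simps)
    ultimately show "\<exists>J. has_RS_integral (\<lambda>u. u) \<psi> L p J \<and> L * \<psi> L + J \<ge> p * C / \<alpha>"
      by (intro exI[of _ "c * (p - L)"]) simp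
  qed
  moreover have "\<psi> L \<ge> C / \<alpha>" using assms by (simp add: \<psi>_def c_def)
  moreover have "\<psi> U \<le> C" using cC by (simp add: \<psi>_def)
  ultimately show ?thesis by blast
qed

end
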